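(* Let $\Theta$ be a finite set, $c\in\mathbb{R}^{\Theta}$, and let $\mathcal{Y}=((b_1,v_1),\dots,(b_m,v_m))$ be a finite ordered list with $b_j\in\mathbb{R}^{\Theta}_{\ge0}\setminus\{0\}$, $v_j\in\mathbb{R}$. Define $\Upsilon_v(b)$ for $b\in\mathbb{R}^\Theta_{\ge0}$ by: if no $j$ satisfies $v_j-c^Tb_j>0$, set $\Upsilon_v(b)=c^Tb$; otherwise, with $j^*$ the first index with $v_{j^*}-c^Tb_{j^*}>0$, set $$\Upsilon_v(b)=c^Tb+\Big(\min_{\vartheta:\,b_{j^*}(\vartheta)>0}\frac{b(\vartheta)}{b_{j^*}(\vartheta)}\Big)(v_{j^*}-c^Tb_{j^*}).$$ Similarly, for a list $((\zeta_1,w_1),\dots,(\zeta_m,w_m))$ with $\zeta_j\in\mathbb{R}^\Theta_{\ge0}\setminus\{0\}$, define $\Upsilon_w(\lambda)$ for $\lambda\in\mathbb{R}^\Theta_{\ge0}$ by: if no $j$ satisfies $w_j-c^T\zeta_j<0$, $\Upsilon_w(\lambda)=c^T\lambda$; otherwise with $j^*$ the first such index, $$\Upsilon_w(\lambda)=c^T\lambda+\Big(\min_{\vartheta:\,\zeta_{j^*}(\vartheta)>0}\frac{\lambda(\vartheta)}{\zeta_{j^*}(\vartheta)}\Big)(w_{j^*}-c^T\zeta_{j^*}).$$ Then the constraint $V\le\Upsilon_v(b)$ is linear in the variables $(V,b)$ and the constraint $W\ge\Upsilon_w(\lambda)$ is linear in $(W,\lambda)$: there exist finitely many affine functions $\ell_1,\dots,\ell_K$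 on $\mathbb{R}^\Theta$ such that for all $V\in\mathbb{R}$, $b\in\mathbb{R}^\Theta_{\ge0}$, $V\le\Upsilon_v(b)$ iff $V\le\ell_k(b)$ for all $k$; and finitely many affine $m_1,\dots,m_L$ such that for all $W\in\mathbb{R}$, $\lambda\in\mathbb{R}^\Theta_{\ge0}$, $W\ge\Upsilon_w(\lambda)$ iff $W\ge m_l(\lambda)$ for all $l$.
   Context: These are the sawtooth approximations used in a point-based value iteration algorithm: $\Upsilon_v$ (SAWTOOTH-A) is computed from a set of "corner" belief-value pairs, whose values form the vector $c$ (the value at the corner point of index $\vartheta$ gives $c(\vartheta)$), and a set $\mathcal{Y}$ of non-corner belief-value pairs; $\Upsilon_w$ (SAWTOOTH-D) is the analogous construction for vectors in $\mathbb{R}^{|\Theta|}$. *)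

theory Defs
  imports "HOL-Analysis.Analysis"
begin

definition dotp :: "('a::finite \<Rightarrow> real) \<Rightarrow> ('a \<Rightarrow> real) \<Rightarrow> real" where
  "dotp c b = (\<Sum>\<theta>\<in>UNIV. c \<theta> * b \<theta>)"

definition aff :: "('a::finite \<Rightarrow> real) \<times> real \<Rightarrow> ('a \<Rightarrow> real) \<Rightarrow> real" where
  "aff p b = snd p + dotp (fst p) b"

definition sawtooth_A ::
  "('a::finite \<Rightarrow> real) \<Rightarrow> (('a \<Rightarrow> real) \<times> real) list \<Rightarrow> ('a \<Rightarrow> real) \<Rightarrow> real" where
  "sawtooth_A c Y b =
     (case find (\<lambda>(bj, vj). vj - dotp c bj > 0) Y of
        None \<Rightarrow> dotp c b
      | Some (bj, vj) \<Rightarrow>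
          dotp c b + Min {b \<theta> / bj \<theta> | \<theta>. bj \<theta> > 0} * (vj - dotp c bj))"

definition sawtooth_D ::
  "('a::finite \<Rightarrow> real) \<Rightarrow> (('a \<Rightarrow> real) \<times> real) list \<Rightarrow> ('a \<Rightarrow> real) \<Rightarrow> real" where
  "sawtooth_D c Z l =
     (case find (\<lambda>(zj, wj). wj - dotp c zj < 0) Z of
        None \<Rightarrow> dotp c l
      | Some (zj, wj) \<Rightarrow>
          dotp c l + Min {l \<theta> / zj \<theta> | \<theta>. zj \<theta> > 0} * (wj - dotp c zj))"

end

theory Submission
  imports Defs
begin

lemma dotp_upd:
  "dotp (\<lambda>\<theta>. c \<theta> + k * (if \<theta> = t then 1 else 0)) b = dotp c b + k * b t"
proof -
  have "dotp (\<lambda>\<theta>. c \<theta> + k * (if \<theta> = t then 1 else 0)) b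
      = (\<Sum>\<theta>\<in>UNIV. c \<theta> * b \<theta>) + (\<Sum>\<theta>\<in>UNIV. (if \<theta> = t then k * b \<theta> else 0))"
    unfolding dotp_def sum.distrib[symmetric] by (intro sum.cong) (auto simp: distrib_right)
  then show ?thesis by (simp add: dotp_def)
qed

lemma min_le_iff:
  fixes d :: real and bj :: "'a::finite \<Rightarrow> real"
  assumes ne: "\<exists>t. bj t > 0" and d: "d > 0"
  shows "V \<le> x + Min {b \<theta> / bj \<theta> | \<theta>. bj \<theta> > 0} * d \<longleftrightarrow>
         (\<forall>t. bj t > 0 \<longrightarrow> V \<le> x + b t / bj t * d)"
proof -
  have fin: "finite {b \<theta> / bj \<theta> | \<theta>. bj \<theta> > 0}" by simp
  have nen: "{b \<theta> / bj \<theta> | \<theta>. bj \<theta> > 0} \<noteq> {}" using ne by auto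
  have "V \<le> x + Min {b \<theta> / bj \<theta> | \<theta>. bj \<theta> > 0} * d \<longleftrightarrow>
        (V - x) / d \<le> Min {b \<theta> / bj \<theta> | \<theta>. bj \<theta> > 0}"
    using d by (simp add: pos_divide_le_eq algebra_simps)
  also have "\<dots> \<longleftrightarrow> (\<forall>t. bj t > 0 \<longrightarrow> (V - x) / d \<le> b t / bj t)"
    using Min_ge_iff[OF fin nen] by auto
  also have "\<dots> \<longleftrightarrow> (\<forall>t. bj t > 0 \<longrightarrow> V \<le> x + b t / bj t * d)"
    using d by (simp add: pos_divide_le_eq algebra_simps)
  finally show ?thesis .
qed

lemma min_ge_iff:
  fixes d :: real and bj :: "'a::finite \<Rightarrow> real"
  assumes ne: "\<exists>t. bj t > 0" and d: "d < 0"
  shows "W \<ge> x + Min {b \<theta> / bj \<theta> | \<theta>. bj \<theta> > 0} * d \<longleftrightarrow>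
         (\<forall>t. bj t > 0 \<longrightarrow> W \<ge> x + b t / bj t * d)"
proof -
  have fin: "finite {b \<theta> / bj \<theta> | \<theta>. bj \<theta> > 0}" by simp
  have nen: "{b \<theta> / bj \<theta> | \<theta>. bj \<theta> > 0} \<noteq> {}" using ne by auto
  have "W \<ge> x + Min {b \<theta> / bj \<theta> | \<theta>. bj \<theta> > 0} * d \<longleftrightarrow>
        (W - x) / d \<le> Min {b \<theta> / bj \<theta> | \<theta>. bj \<theta> > 0}"
    using d by (simp add: neg_divide_le_eq algebra_simps)
  also have "\<dots> \<longleftrightarrow> (\<forall>t. bj t > 0 \<longrightarrow> (W - x) / d \<le> b t / bj t)"
    using Min_ge_iff[OF fin nen] by auto
  also have "\<dots> \<longleftrightarrow> (\<forall>t. bj t > 0 \<longrightarrow> W \<ge> x + b t / bj t * d)"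
    using d by (simp add: neg_divide_le_eq algebra_simps)
  finally show ?thesis .
qed

lemma pos_exists:
  assumes "\<forall>\<theta>. bj \<theta> \<ge> (0::real)" "bj \<noteq> (\<lambda>_. 0)"
  shows "\<exists>t. bj t > 0"
proof -
  from assms(2) obtain t where "bj t \<noteq> 0" by auto
  with assms(1) have "bj t > 0" by (metis less_eq_real_def)
  then show ?thesis by blast
qed

theorem lemma4:
  fixes c :: "'a::finite \<Rightarrow> real"
    and Y :: "(('a \<Rightarrow> real) \<times> real) list"
    and Z :: "(('a \<Rightarrow> real) \<times> real) list"
  assumes Y_nonneg: "\<forall>(bj, vj) \<in> set Y. (\<forall>\<theta>. bj \<theta> \<ge> 0) \<and> bj \<noteq> (\<lambda>_. 0)"
    and Z_nonneg: "\<forall>(zj, wj) \<in> set Z. (\<forall>\<theta>. zj \<theta> \<ge> 0) \<and> zj \<noteq> (\<lambda>_. 0)"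
  shows "(\<exists>Ls :: (('a \<Rightarrow> real) \<times> real) set. finite Ls \<and>
            (\<forall>V b. (\<forall>\<theta>. b \<theta> \<ge> 0) \<longrightarrow>
               (V \<le> sawtooth_A c Y b \<longleftrightarrow> (\<forall>p \<in> Ls. V \<le> aff p b))))
       \<and> (\<exists>Ms :: (('a \<Rightarrow> real) \<times> real) set. finite Ms \<and>
            (\<forall>W l. (\<forall>\<theta>. l \<theta> \<ge> 0) \<longrightarrow>
               (W \<ge> sawtooth_D c Z l \<longleftrightarrow> (\<forall>p \<in> Ms. W \<ge> aff p l))))"
proof
  show "\<exists>Ls :: (('a \<Rightarrow> real) \<times> real) set. finite Ls \<and>
            (\<forall>V b. (\<forall>\<theta>. b \<theta> \<ge> 0) \<longrightarrow>
               (V \<le> sawtooth_A c Y b \<longleftrightarrow> (\<forall>p \<in> Ls. V \<le> aff p b)))"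
  proof (cases "find (\<lambda>(bj, vj). vj - dotp c bj > 0) Y")
    case None
    have "sawtooth_A c Y b = dotp c b" for b unfolding sawtooth_A_def None by simp
    then show ?thesis by (intro exI[of _ "{(c,0)}"]) (simp add: aff_def)
  next
    case (Some a)
    obtain bj vj where a: "a = (bj, vj)" by fastforce
    have mem: "(bj, vj) \<in> set Y" and pos: "vj - dotp c bj > 0"
      using Some a by (auto simp: find_Some_iff) (metis nth_mem)
    have ne: "\<exists>t. bj t > 0" using Y_nonneg mem pos_exists by fastforce
    define d where "d = vj - dotp c bj"
    let ?L = "(\<lambda>t. ((\<lambda>\<theta>. c \<theta> + (d / bj t) * (if \<theta> = t then 1 else 0)), 0::real)) ` {t. bj t > 0}"
    show ?thesis
    proof (rule exI[of _ ?L], intro conjI allI impI)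
      show "finite ?L" by simp
      fix V b
      have af: "aff ((\<lambda>\<theta>. c \<theta> + (d / bj t) * (if \<theta> = t then 1 else 0)), 0) b = dotp c b + b t / bj t * d" for t
        unfolding aff_def by (simp only: dotp_upd snd_conv fst_conv) simp
      have "V \<le> sawtooth_A c Y b \<longleftrightarrow> (\<forall>t. bj t > 0 \<longrightarrow> V \<le> dotp c b + b t / bj t * d)"
        unfolding sawtooth_A_def Some a using min_le_iff[OF ne, of d] pos d_def by simp
      also have "\<dots> \<longleftrightarrow> (\<forall>p \<in> ?L. V \<le> aff p b)"
        by (auto simp only: af image_iff mem_Collect_eq) (metis (no_types, lifting) af imageI mem_Collect_eq)
      finally show "V \<le> sawtooth_A c Y b \<longleftrightarrow> (\<forall>p \<in> ?L. V \<le> aff p b)" .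
    qed
  qed
next
  show "\<exists>Ms :: (('a \<Rightarrow> real) \<times> real) set. finite Ms \<and>
            (\<forall>W l. (\<forall>\<theta>. l \<theta> \<ge> 0) \<longrightarrow>
               (W \<ge> sawtooth_D c Z l \<longleftrightarrow> (\<forall>p \<in> Ms. W \<ge> aff p l)))"
  proof (cases "find (\<lambda>(zj, wj). wj - dotp c zj < 0) Z")
    case None
    have "sawtooth_D c Z b = dotp c b" for b unfolding sawtooth_D_def None by simp
    then show ?thesis by (intro exI[of _ "{(c,0)}"]) (simp add: aff_def)
  next
    case (Some a)
    obtain bj vj where a: "a = (bj, vj)" by fastforce
    have mem: "(bj, vj) \<in> set Z" and pos: "vj - dotp c bj < 0"
      using Some a by (auto simp: find_Some_iff) (metis nth_mem)
    have ne: "\<exists>t. bj t > 0" using Z_nonneg mem pos_exists by fastforce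
    define d where "d = vj - dotp c bj"
    let ?L = "(\<lambda>t. ((\<lambda>\<theta>. c \<theta> + (d / bj t) * (if \<theta> = t then 1 else 0)), 0::real)) ` {t. bj t > 0}"
    show ?thesis
    proof (rule exI[of _ ?L], intro conjI allI impI)
      show "finite ?L" by simp
      fix W l
      have af: "aff ((\<lambda>\<theta>. c \<theta> + (d / bj t) * (if \<theta> = t then 1 else 0)), 0) l = dotp c l + l t / bj t * d" for t
        unfolding aff_def by (simp only: dotp_upd snd_conv fst_conv) simp
      have "W \<ge> sawtooth_D c Z l \<longleftrightarrow> (\<forall>t. bj t > 0 \<longrightarrow> W \<ge> dotp c l + l t / bj t * d)"
        unfolding sawtooth_D_def Some a using min_ge_iff[OF ne, of d] pos d_def by simp
      also have "\<dots> \<longleftrightarrow> (\<forall>p \<in> ?L. W \<ge> aff p l)"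
        by (auto simp only: af image_iff mem_Collect_eq) (metis (no_types, lifting) af imageI mem_Collect_eq)
      finally show "W \<ge> sawtooth_D c Z l \<longleftrightarrow> (\<forall>p \<in> ?L. W \<ge> aff p l)" .
    qed
  qed
qed

end
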